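(* Let $P(s),C(s)$ be $n\times n$ real rational proper transfer function matrices with no poles in the closed right half-plane, such that the feedback system of $P$ and $C$ is well-posed. If $$\theta(P(j\omega))+\theta(C(j\omega))<\pi\quad\text{for all }\omega\in[-\infty,\infty],$$ then the feedback system is stable, i.e., $(I+C(s)P(s))^{-1}$ is proper with no poles in the closed right half-plane.
   Context: For a nonzero $A\in\mathbb{C}^{n\times n}$, the matrix singular angle $\theta(A)\in[0,\pi]$ is defined by $\cos\theta(A)=\inf\{\mathrm{Re}(x^*Ax)/(|x|\,|Ax|):0\ne x\in\mathbb{C}^n,\ Ax\ne0\}$; the frequency-wise singular angle is $\theta(P(j\omega))$ if $P(j\omega)\ne0$ and $0$ if $P(j\omega)=0$, where $P(j\pm\infty)=\lim_{\omega\to\pm\infty}P(j\omega)$. The feedback system of $P,C$ (with $u_1=e_1-y_2$, $u_2=e_2+y_1$, $y_1=Pu_1$, $y_2=Cu_2$) is well-posed if $(I+C(s)P(s))^{-1}$ exists and is proper, and (for such stable $P,C$) stable if and only if $(I+C(s)P(s))^{-1}$ is proper with no poles in the closed right half-plane. *)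

theory Defs
  imports "HOL-Analysis.Analysis" "HOL-Computational_Algebra.Polynomial"
begin

definition rat_fun :: "real poly \<Rightarrow> real poly \<Rightarrow> complex \<Rightarrow> complex" where
  "rat_fun p q s = poly (map_poly complex_of_real p) s / poly (map_poly complex_of_real q) s"

definition real_rational_proper :: "(complex \<Rightarrow> complex^'n^'n) \<Rightarrow> bool" where
  "real_rational_proper G \<longleftrightarrow>
     (\<forall>i j. \<exists>p q. q \<noteq> 0 \<and> degree p \<le> degree q \<and> (\<forall>s. G s $ i $ j = rat_fun p q s))"

definition real_rational_proper_stable :: "(complex \<Rightarrow> complex^'n^'n) \<Rightarrow> bool" where
  "real_rational_proper_stable G \<longleftrightarrow>
     (\<forall>i j. \<exists>p q. q \<noteq> 0 \<and> degree p \<le> degree q \<and>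
        (\<forall>s. Re s \<ge> 0 \<longrightarrow> poly (map_poly complex_of_real q) s \<noteq> 0) \<and>
        (\<forall>s. G s $ i $ j = rat_fun p q s))"

text \<open>M is the inverse of the rational matrix I + C P (equality of rational
  matrices, i.e. pointwise identity away from finitely many points).\<close>
definition is_inverse_IpCP ::
  "(complex \<Rightarrow> complex^'n^'n) \<Rightarrow> (complex \<Rightarrow> complex^'n^'n) \<Rightarrow> (complex \<Rightarrow> complex^'n^'n) \<Rightarrow> bool" where
  "is_inverse_IpCP M P C \<longleftrightarrow> finite {s. M s ** (mat 1 + C s ** P s) \<noteq> mat 1}"

definition well_posed :: "(complex \<Rightarrow> complex^'n^'n) \<Rightarrow> (complex \<Rightarrow> complex^'n^'n) \<Rightarrow> bool" where
  "well_posed P C \<longleftrightarrow> (\<exists>M. real_rational_proper M \<and> is_inverse_IpCP M P C)"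

definition feedback_stable :: "(complex \<Rightarrow> complex^'n^'n) \<Rightarrow> (complex \<Rightarrow> complex^'n^'n) \<Rightarrow> bool" where
  "feedback_stable P C \<longleftrightarrow> (\<exists>M. real_rational_proper_stable M \<and> is_inverse_IpCP M P C)"

definition cinner :: "complex^'n \<Rightarrow> complex^'n \<Rightarrow> complex" where
  "cinner x y = (\<Sum>i\<in>UNIV. cnj (x $ i) * y $ i)"

definition sing_angle :: "complex^'n^'n \<Rightarrow> real" where
  "sing_angle A = arccos (Inf {Re (cinner x (A *v x)) / (norm x * norm (A *v x)) | x.
                                  x \<noteq> 0 \<and> A *v x \<noteq> 0})"

definition freq_angle :: "complex^'n^'n \<Rightarrow> real" where
  "freq_angle A = (if A = 0 then 0 else sing_angle A)"

definition val_inf :: "(complex \<Rightarrow> complex^'n^'n) \<Rightarrow> complex^'n^'n" where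
  "val_inf G = Lim at_top (\<lambda>w::real. G (\<i> * of_real w))"

definition val_minf :: "(complex \<Rightarrow> complex^'n^'n) \<Rightarrow> complex^'n^'n" where
  "val_minf G = Lim at_bot (\<lambda>w::real. G (\<i> * of_real w))"

end

theory Submission imports Defs "HOL-Complex_Analysis.Complex_Analysis" "HOL-Computational_Algebra.Polynomial_Factorial" "HOL-Computational_Algebra.Field_as_Ring" begin

no_notation fps_nth (infixl \<open>$\<close> 75)

abbreviation cp :: "real poly \<Rightarrow> complex poly" where "cp p \<equiv> map_poly complex_of_real p"

lemma cp_add: "cp (x + y) = cp x + cp y"
  by (rule poly_eqI) (simp add: coeff_map_poly)

lemma cp_mult: "poly (cp (p * q)) s = poly (cp p) s * poly (cp q) s"
  by (induct p) (auto simp: map_poly_pCons cp_add map_poly_smult algebra_simps)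

lemma cp_eq_0: "cp p = 0 \<longleftrightarrow> p = 0"
  by (rule map_poly_eq_0_iff) auto

lemma cp_degree: "degree (cp p) = degree p"
  by (rule degree_map_poly) auto

lemma cp_coeff: "coeff (cp p) n = of_real (coeff p n)"
  by (simp add: coeff_map_poly)

lemma eventually_not_in_finite: "finite A \<Longrightarrow> eventually (\<lambda>y. y \<notin> A) (at (x::'a::{t1_space,perfect_space}))"
  using islimpt_finite islimpt_iff_eventually by blast

lemma rat_fun_lim:
  assumes "q \<noteq> 0" "degree p \<le> degree q"
  shows "(rat_fun p q \<longlongrightarrow> of_real (coeff p (degree q) / lead_coeff q)) at_infinity"
proof -
  define d where "d = degree q"
  have ev: "\<forall>\<^sub>F s in at_infinity. rat_fun p q s = (poly (cp p) s / s^d) / (poly (cp q) s / s^d)"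
  proof (rule eventually_at_infinityI[of 1])
    fix s :: complex assume "1 \<le> norm s"
    then have "s \<noteq> 0" by auto
    then show "rat_fun p q s = (poly (cp p) s / s^d) / (poly (cp q) s / s^d)"
      by (simp add: rat_fun_def divide_simps)
  qed
  have lq: "((\<lambda>s. poly (cp q) s / s^d) \<longlongrightarrow> of_real (lead_coeff q)) at_infinity"
    using poly_divide_tendsto_aux[of "cp q"] by (simp add: cp_degree cp_coeff d_def)
  have lp: "((\<lambda>s. poly (cp p) s / s^d) \<longlongrightarrow> of_real (coeff p d)) at_infinity"
  proof (cases "degree p = d")
    case True
    then show ?thesis using poly_divide_tendsto_aux[of "cp p"] by (simp add: cp_degree cp_coeff)
  next
    case False
    then have lt: "degree p < d" using assms d_def by auto
    then have c0: "coeff p d = 0" by (simp add: coeff_eq_0)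
    have ev2: "\<forall>\<^sub>F s in at_infinity. poly (cp p) s / s^d = (poly (cp p) s / s^(degree p)) * (1 / s^(d - degree p))"
    proof (rule eventually_at_infinityI[of 1])
      fix s :: complex assume "1 \<le> norm s"
      then have "s \<noteq> 0" by auto
      then show "poly (cp p) s / s^d = (poly (cp p) s / s^(degree p)) * (1 / s^(d - degree p))"
        using lt by (simp add: divide_simps power_add[symmetric])
    qed
    have "((\<lambda>s. (poly (cp p) s / s^(degree p)) * (1 / s^(d - degree p))) \<longlongrightarrow> lead_coeff (cp p) * 0) at_infinity"
      apply (intro tendsto_mult tendsto_divide_0[OF tendsto_const])
      using poly_divide_tendsto_aux[of "cp p"] apply (simp add: cp_degree)
      using lt by (auto intro!: filterlim_power_at_infinity)
    then show ?thesis using c0 tendsto_cong[OF ev2] by simp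
  qed
  have "lead_coeff q \<noteq> 0" using assms by simp
  then have "((\<lambda>s. (poly (cp p) s / s^d) / (poly (cp q) s / s^d)) \<longlongrightarrow> of_real (coeff p d) / of_real (lead_coeff q)) at_infinity"
    by (intro tendsto_divide lp lq) simp
  then show ?thesis using tendsto_cong[OF ev] d_def by simp
qed

lemma rat_fun_holo:
  "rat_fun p q holomorphic_on {s. poly (cp q) s \<noteq> 0}"
  unfolding rat_fun_def by (intro holomorphic_intros poly_holomorphic_on) auto

lemma open_nonzero_poly: "open {s::complex. poly (cp q) s \<noteq> 0}"
  by (intro open_Collect_neq continuous_intros continuous_on_poly) 

lemma tendsto_det:
  fixes A :: "'b \<Rightarrow> 'a::{real_normed_field}^'n^'n"
  assumes "\<And>i j. ((\<lambda>x. A x $ i $ j) \<longlongrightarrow> B $ i $ j) F"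
  shows "((\<lambda>x. det (A x)) \<longlongrightarrow> det B) F"
  unfolding det_def by (intro tendsto_intros assms)

lemma continuous_on_det:
  fixes A :: "'b::topological_space \<Rightarrow> 'a::{real_normed_field}^'n^'n"
  assumes "\<And>i j. continuous_on S (\<lambda>x. A x $ i $ j)"
  shows "continuous_on S (\<lambda>x. det (A x))"
  unfolding det_def by (intro continuous_intros assms)

lemma holomorphic_det:
  fixes A :: "complex \<Rightarrow> complex^'n^'n"
  assumes "\<And>i j. (\<lambda>x. A x $ i $ j) holomorphic_on S"
  shows "(\<lambda>x. det (A x)) holomorphic_on S"
  unfolding det_def by (intro holomorphic_intros assms)

lemma entry_IpBA:
  "(mat 1 + t *\<^sub>R (B ** A)) $ i $ j = (if i = j then 1 else 0) + of_real t * (\<Sum>k\<in>UNIV. B$i$k * (A::complex^'n^'n)$k$j)"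
  by (simp add: matrix_matrix_mult_def mat_def vector_scaleR_component) (simp add: scaleR_conv_of_real)

lemma filterlim_imag_axis: "filterlim (\<lambda>w::real. \<i> * of_real w) at_infinity at_top"
proof -
  have "filterlim (\<lambda>w::real. \<bar>w\<bar>) at_top at_top"
    by (rule filterlim_at_top_mono[OF filterlim_ident]) (auto intro!: always_eventually)
  then show ?thesis by (simp add: filterlim_at_infinity_conv_norm_at_top norm_mult)
qed

lemma stable_props:
  fixes G :: "complex \<Rightarrow> complex^'n^'n"
  assumes "real_rational_proper_stable G"
  obtains U where "open U" "{s. 0 \<le> Re s} \<subseteq> U" "\<And>i j. (\<lambda>s. G s $ i $ j) holomorphic_on U"
    "\<And>i j. ((\<lambda>s. G s $ i $ j) \<longlongrightarrow> val_inf G $ i $ j) at_infinity"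
proof -
  from assms obtain p q where pq: "\<And>i j. q i j \<noteq> 0 \<and> degree (p i j) \<le> degree (q i j) \<and>
      (\<forall>s. 0 \<le> Re s \<longrightarrow> poly (cp (q i j)) s \<noteq> 0) \<and> (\<forall>s. G s $ i $ j = rat_fun (p i j) (q i j) s)"
    unfolding real_rational_proper_stable_def by metis
  have Geq: "(\<lambda>s. G s $ i $ j) = rat_fun (p i j) (q i j)" for i j using pq by auto
  define U where "U = (\<Inter>i. \<Inter>j. {s. poly (cp (q i j)) s \<noteq> 0})"
  have "open U" unfolding U_def by (intro open_INT ballI open_nonzero_poly) simp_all
  moreover have "{s. 0 \<le> Re s} \<subseteq> U" unfolding U_def using pq by auto
  moreover have "(\<lambda>s. G s $ i $ j) holomorphic_on U" for i j
    unfolding Geq by (rule holomorphic_on_subset[OF rat_fun_holo]) (auto simp: U_def)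
  moreover 
  define L where "L = (\<chi> i j. complex_of_real (coeff (p i j) (degree (q i j)) / lead_coeff (q i j)))"
  have lim: "((\<lambda>s. G s $ i $ j) \<longlongrightarrow> L $ i $ j) at_infinity" for i j
    unfolding Geq L_def using rat_fun_lim pq by simp
  have "((\<lambda>w::real. G (\<i> * of_real w)) \<longlongrightarrow> L) at_top"
    by (intro vec_tendstoI filterlim_compose[OF lim filterlim_imag_axis])
  then have "val_inf G = L" unfolding val_inf_def by (intro tendsto_Lim) auto
  ultimately show ?thesis using that lim by auto
qed



lemma Re_cinner: "Re (cinner x y) = inner x y"
  by (simp add: cinner_def inner_vec_def inner_complex_def Re_sum)

lemma ratio_bounds:
  fixes x y :: "complex^'n"
  shows "-1 \<le> inner x y / (norm x * norm y) \<and> inner x y / (norm x * norm y) \<le> 1"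
proof (cases "x = 0 \<or> y = 0")
  case True then show ?thesis by auto
next
  case False
  then have pos: "norm x * norm y > 0" by auto
  have "\<bar>inner x y\<bar> \<le> norm x * norm y" by (rule Cauchy_Schwarz_ineq2)
  then show ?thesis using pos by (auto simp: divide_simps abs_le_iff)
qed

lemma sing_angle_ge:
  fixes A :: "complex^'n^'n"
  assumes "x \<noteq> 0" "A *v x \<noteq> 0"
  shows "arccos (inner x (A *v x) / (norm x * norm (A *v x))) \<le> sing_angle A"
proof -
  define S where "S = {Re (cinner x (A *v x)) / (norm x * norm (A *v x)) | x.
                                  x \<noteq> 0 \<and> A *v x \<noteq> 0}"
  define r where "r = inner x (A *v x) / (norm x * norm (A *v x))"
  have rS: "r \<in> S" unfolding S_def r_def using assms by (auto simp: Re_cinner)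
  have lb: "\<And>e. e \<in> S \<Longrightarrow> -1 \<le> e" unfolding S_def using ratio_bounds by (auto simp: Re_cinner)
  have "bdd_below S" using lb by (auto simp: bdd_below_def)
  have "Inf S \<le> r" using rS \<open>bdd_below S\<close> by (rule cInf_lower)
  moreover have "-1 \<le> Inf S" using rS lb by (intro cInf_greatest) auto
  moreover have "r \<le> 1" unfolding r_def using ratio_bounds by blast
  ultimately have "arccos r \<le> arccos (Inf S)" by (intro arccos_le_arccos) auto
  then show ?thesis unfolding sing_angle_def S_def r_def .
qed

lemma det_zero_kernel:
  fixes M :: "complex^'n^'n"
  assumes "det M = 0"
  obtains v where "v \<noteq> 0" "M *v v = 0"
proof -
  have "\<not> inj ((*v) M)"
    using det_nz_iff_inj_gen[OF matrix_vector_mul_linear_gen, of M] assms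
    by (simp add: matrix_of_matrix_vector_mul)
  then obtain x y where "x \<noteq> y" "M *v x = M *v y" unfolding inj_def by blast
  then show ?thesis using that[of "x - y"] by (simp add: matrix_vector_mult_diff_distrib)
qed

lemma scaleR_mv: "((t::real) *\<^sub>R (N::complex^'n^'n)) *v v = t *\<^sub>R (N *v v)"
  by (simp add: vec_eq_iff matrix_vector_mult_def scaleR_sum_right)

lemma angle_det:
  fixes A B :: "complex^'n^'n"
  assumes "freq_angle A + freq_angle B < pi" "0 \<le> t"
  shows "det (mat 1 + t *\<^sub>R (B ** A)) \<noteq> 0"
proof
  assume "det (mat 1 + t *\<^sub>R (B ** A)) = 0"
  then obtain v where v0: "v \<noteq> 0" and mv: "(mat 1 + t *\<^sub>R (B ** A)) *v v = 0"
    by (rule det_zero_kernel)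
  define u where "u = A *v v"
  have eq: "v + t *\<^sub>R (B *v u) = 0" using mv
    by (simp add: matrix_vector_mult_add_rdistrib scaleR_mv u_def matrix_vector_mul_assoc)
  have t0: "t \<noteq> 0"
  proof
    assume "t = 0"
    with eq have "v = 0" by simp
    with v0 show False by simp
  qed
  have X: "t *\<^sub>R (B *v u) = - v" using eq by (metis add.commute eq_neg_iff_add_eq_0)
  have "B *v u = (1/t) *\<^sub>R (t *\<^sub>R (B *v u))" using t0 by simp
  also have "\<dots> = (- 1/t) *\<^sub>R v" unfolding X by simp
  finally have Bu: "B *v u = (- 1/t) *\<^sub>R v" .
  have u0: "u \<noteq> 0" using Bu v0 t0 by auto
  have Bu0: "B *v u \<noteq> 0" using Bu v0 t0 by auto
  have A0: "A \<noteq> 0" using u0 u_def by auto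
  have B0: "B \<noteq> 0" using Bu0 by auto
  define r where "r = inner v u / (norm v * norm u)"
  have h1: "arccos r \<le> freq_angle A"
    using sing_angle_ge[of v A] v0 u0 A0 by (simp add: freq_angle_def r_def u_def)
  have "inner u (B *v u) / (norm u * norm (B *v u)) = - r"
  proof -
    have tp: "t > 0" using t0 \<open>0 \<le> t\<close> by auto
    have i1: "inner u (B *v u) = (-1/t) * inner v u" unfolding Bu by (simp add: inner_commute)
    have n1: "norm (B *v u) = (1/t) * norm v" unfolding Bu using tp by simp
    have "norm u * norm v > 0" using u0 v0 by auto
    then show ?thesis unfolding i1 n1 r_def using tp by (simp add: field_simps)
  qed
  then have h2: "arccos (-r) \<le> freq_angle B"
    using sing_angle_ge[of u B] u0 Bu0 B0 by (simp add: freq_angle_def)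
  have "-1 \<le> r \<and> r \<le> 1" unfolding r_def by (rule ratio_bounds)
  then have "arccos (-r) = pi - arccos r" by (simp add: arccos_minus)
  then show False using h1 h2 assms(1) by linarith
qed


lemma homotopy_main:
  fixes P C :: "complex \<Rightarrow> complex^'n^'n"
  assumes oU: "open U" and HU: "{s. 0 \<le> Re s} \<subseteq> U"
    and holP: "\<And>i j. (\<lambda>s. P s $ i $ j) holomorphic_on U"
    and holC: "\<And>i j. (\<lambda>s. C s $ i $ j) holomorphic_on U"
    and limP: "\<And>i j. ((\<lambda>s. P s $ i $ j) \<longlongrightarrow> Pinf $ i $ j) at_infinity"
    and limC: "\<And>i j. ((\<lambda>s. C s $ i $ j) \<longlongrightarrow> Cinf $ i $ j) at_infinity"
    and axis: "\<And>t s. 0 \<le> t \<Longrightarrow> Re s = 0 \<Longrightarrow> det (mat 1 + t *\<^sub>R (C s ** P s)) \<noteq> 0"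
    and infty: "\<And>t. 0 \<le> t \<Longrightarrow> det (mat 1 + t *\<^sub>R (Cinf ** Pinf)) \<noteq> 0"
  shows "\<forall>s. 0 \<le> Re s \<longrightarrow> det (mat 1 + C s ** P s) \<noteq> 0"
proof -
  define F where "F t s = det (mat 1 + t *\<^sub>R (C s ** P s))" for t s
  define K where "K = {0..1::real}"
  define H where "H = {s. 0 < Re s}"
  define Hc where "Hc = {s. 0 \<le> Re s}"
  have HHc: "H \<subseteq> Hc" unfolding H_def Hc_def by auto
  have contP: "continuous_on U (\<lambda>s. P s $ i $ j)" for i j
    using holP holomorphic_on_imp_continuous_on by blast
  have contC: "continuous_on U (\<lambda>s. C s $ i $ j)" for i j
    using holC holomorphic_on_imp_continuous_on by blast
  have hol: "F t holomorphic_on U" for t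
    unfolding F_def by (intro holomorphic_det, unfold entry_IpBA) (intro holomorphic_intros holP holC)
  have contF: "continuous_on (K \<times> U) (\<lambda>x. F (fst x) (snd x))"
  proof -
    have sub: "snd ` (K \<times> U) \<subseteq> U" by auto
    show ?thesis unfolding F_def
      by (intro continuous_on_det, unfold entry_IpBA)
         (intro continuous_intros continuous_on_compose2[OF contP continuous_on_snd sub]
                continuous_on_compose2[OF contC continuous_on_snd sub])
  qed
  have limF: "((\<lambda>x. F (tt x) (ss x)) \<longlongrightarrow> det (mat 1 + t0 *\<^sub>R (Cinf ** Pinf))) F0"
    if "(tt \<longlongrightarrow> t0) F0" "filterlim ss at_infinity F0" for tt ss t0 and F0 :: "'z filter"
    unfolding F_def
    by (intro tendsto_det, unfold entry_IpBA)
       (intro tendsto_intros that filterlim_compose[OF limP that(2)] filterlim_compose[OF limC that(2)])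
  have axisF: "t \<ge> 0 \<Longrightarrow> Re s = 0 \<Longrightarrow> F t s \<noteq> 0" for t s unfolding F_def by (rule axis)
  have Kpos: "t \<in> K \<Longrightarrow> 0 \<le> t" for t unfolding K_def by auto
  have compK: "compact K" unfolding K_def by simp
  have bnd: "\<exists>R. \<forall>t\<in>K. \<forall>s. 0 \<le> Re s \<longrightarrow> R < norm s \<longrightarrow> F t s \<noteq> 0"
  proof (rule ccontr)
    assume "\<not> ?thesis"
    then have "\<forall>n::nat. \<exists>t s. t \<in> K \<and> 0 \<le> Re s \<and> real n < norm s \<and> F t s = 0" by blast
    then obtain tt ss where h: "\<And>n. tt n \<in> K \<and> 0 \<le> Re (ss n) \<and> real n < norm (ss n) \<and> F (tt n) (ss n) = 0"
      by metis
    obtain t0 r where t0: "t0 \<in> K" "strict_mono r" "(tt \<circ> r) \<longlonglongrightarrow> t0"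
      using compact_imp_seq_compact[OF compK] h by (metis seq_compactE)
    have "filterlim (\<lambda>n. ss (r n)) at_infinity sequentially"
      unfolding filterlim_at_infinity_conv_norm_at_top
    proof (rule filterlim_at_top_mono[OF filterlim_real_sequentially], rule always_eventually, rule allI)
      fix n
      have "real n \<le> real (r n)" using seq_suble[OF t0(2)] by simp
      also have "\<dots> \<le> norm (ss (r n))" using h[of "r n"] by simp
      finally show "real n \<le> norm (ss (r n))" .
    qed
    from limF[OF t0(3)[unfolded comp_def] this]
    have "(\<lambda>n. F (tt (r n)) (ss (r n))) \<longlonglongrightarrow> det (mat 1 + t0 *\<^sub>R (Cinf ** Pinf))" .
    moreover have "(\<lambda>n. F (tt (r n)) (ss (r n))) = (\<lambda>n. 0)" using h by auto
    ultimately have "det (mat 1 + t0 *\<^sub>R (Cinf ** Pinf)) = 0"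
      using LIMSEQ_unique tendsto_const by metis
    then show False using infty Kpos t0(1) by blast
  qed
  then obtain R where R: "\<And>t s. t \<in> K \<Longrightarrow> 0 \<le> Re s \<Longrightarrow> R < norm s \<Longrightarrow> F t s \<noteq> 0" by blast
  define Z where "Z = {x \<in> K \<times> Hc. F (fst x) (snd x) = 0}"
  have "closed Z" unfolding Z_def
  proof (rule continuous_closed_preimage_constant)
    show "continuous_on (K \<times> Hc) (\<lambda>x. F (fst x) (snd x))"
      by (rule continuous_on_subset[OF contF]) (use HU in \<open>auto simp: Hc_def\<close>)
    show "closed (K \<times> Hc)" unfolding K_def Hc_def
      by (intro closed_Times closed_halfspace_Re_ge closed_atLeastAtMost)
  qed
  moreover have "bounded Z"
  proof (rule bounded_subset)
    show "bounded (K \<times> cball (0::complex) R)" using compact_imp_bounded[OF compK] by (intro bounded_Times bounded_cball)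
    show "Z \<subseteq> K \<times> cball (0::complex) R"
    proof
      fix x assume "x \<in> Z"
      then have x: "fst x \<in> K" "0 \<le> Re (snd x)" "F (fst x) (snd x) = 0" unfolding Z_def Hc_def by auto
      then have "norm (snd x) \<le> R" using R[of "fst x" "snd x"] by (meson not_le)
      then show "x \<in> K \<times> cball 0 R" using x(1) by (cases x) auto
    qed
  qed
  ultimately have "compact Z" by (simp add: compact_eq_bounded_closed)
  then have clZ: "closed (fst ` Z)"
    by (intro compact_imp_closed compact_continuous_image continuous_on_fst continuous_on_id)
  define T where "T = {t \<in> K. \<forall>s\<in>H. F t s \<noteq> 0}"
  have cover: "K \<subseteq> T \<union> fst ` Z"
  proof
    fix t assume "t \<in> K"
    show "t \<in> T \<union> fst ` Z"
    proof (cases "t \<in> T")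
      case False
      then obtain s where "s \<in> H" "F t s = 0" using \<open>t \<in> K\<close> unfolding T_def by auto
      then have "(t, s) \<in> Z" unfolding Z_def using \<open>t \<in> K\<close> HHc by auto
      then show ?thesis by force
    qed auto
  qed
  have disj: "T \<inter> fst ` Z = {}"
  proof (rule ccontr)
    assume "T \<inter> fst ` Z \<noteq> {}"
    then obtain t s where ts: "t \<in> T" "(t, s) \<in> Z" by force
    then have "0 \<le> Re s" "F t s = 0" "t \<in> K" unfolding Z_def Hc_def by auto
    moreover have "Re s \<noteq> 0" using axisF Kpos calculation by blast
    ultimately have "s \<in> H" unfolding H_def by auto
    then show False using ts(1) \<open>F t s = 0\<close> unfolding T_def by auto
  qed
  have T0: "0 \<in> T" unfolding T_def K_def F_def by simp
  have clT: "closed T"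
    unfolding closed_sequential_limits
  proof (intro allI impI, elim conjE)
    fix f l assume fT: "\<forall>n. f n \<in> T" and fl: "f \<longlonglongrightarrow> l"
    have lK: "l \<in> K"
      using closed_sequentially[of K f l] fT fl unfolding T_def K_def by auto
    have "F l z0 \<noteq> 0" if z0: "z0 \<in> H" for z0
    proof (cases "F l constant_on H")
      case True
      then obtain c where c: "\<And>z. z \<in> H \<Longrightarrow> F l z = c" unfolding constant_on_def by blast
      have "0 \<in> U" using HU by auto
      have "continuous_on U (F l)" using hol[of l] by (rule holomorphic_on_imp_continuous_on)
      then have "isCont (F l) 0" using continuous_on_eq_continuous_at[OF oU] \<open>0 \<in> U\<close> by blast
      moreover have "((\<lambda>e::real. complex_of_real e) \<longlongrightarrow> 0) (at_right 0)"
        by (intro tendsto_eq_intros) auto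
      ultimately have l1: "((\<lambda>e::real. F l (complex_of_real e)) \<longlongrightarrow> F l 0) (at_right 0)"
        by (rule isCont_tendsto_compose)
      have "eventually (\<lambda>e::real. F l (complex_of_real e) = c) (at_right 0)"
        using eventually_at_right_less[of "0::real"] by eventually_elim (auto simp: H_def c)
      then have "((\<lambda>e::real. F l (complex_of_real e)) \<longlongrightarrow> c) (at_right 0)"
        by (rule tendsto_eventually)
      then have "c = F l 0" using l1 tendsto_unique by (metis trivial_limit_at_right_real)
      moreover have "F l 0 \<noteq> 0" using axisF Kpos lK by simp
      ultimately show ?thesis using c z0 by simp
    next
      case False
      show ?thesis
      proof (rule Hurwitz_no_zeros[of H "\<lambda>n. F (f n)" "F l"])
        show "open H" unfolding H_def by (rule open_halfspace_Re_gt)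
        show "connected H" unfolding H_def by (intro convex_connected convex_halfspace_Re_gt)
        have HU': "H \<subseteq> U" using HU HHc unfolding Hc_def by auto
        show "F (f n) holomorphic_on H" for n by (rule holomorphic_on_subset[OF hol HU'])
        show "F l holomorphic_on H" by (rule holomorphic_on_subset[OF hol HU'])
        show "\<not> F l constant_on H" by fact
        show "F (f n) z \<noteq> 0" if "z \<in> H" for n z using fT that unfolding T_def by auto
        show "z0 \<in> H" by fact
        show "uniform_limit Kc (\<lambda>n. F (f n)) (F l) sequentially" if "compact Kc" "Kc \<subseteq> H" for Kc
        proof -
          have "uniformly_continuous_on (K \<times> Kc) (\<lambda>x. F (fst x) (snd x))"
            by (intro compact_uniformly_continuous continuous_on_subset[OF contF] compact_Times compK that)
               (use that HU' in auto)
          then show ?thesis unfolding uniform_limit_iff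
          proof (intro allI impI)
            fix e :: real assume "0 < e"
            assume uc: "uniformly_continuous_on (K \<times> Kc) (\<lambda>x. F (fst x) (snd x))"
            obtain d where d: "d > 0" "\<And>x x'. x \<in> K \<times> Kc \<Longrightarrow> x' \<in> K \<times> Kc \<Longrightarrow> dist x' x < d \<Longrightarrow>
                dist (F (fst x') (snd x')) (F (fst x) (snd x)) < e"
              using uc \<open>0 < e\<close> unfolding uniformly_continuous_on_def by metis
            have "eventually (\<lambda>n. dist (f n) l < d) sequentially" using fl d(1) by (rule tendstoD)
            then show "eventually (\<lambda>n. \<forall>z\<in>Kc. dist (F (f n) z) (F l z) < e) sequentially"
            proof eventually_elim
              case (elim n)
              show ?case
              proof
                fix z assume "z \<in> Kc"
                have "f n \<in> K" using fT unfolding T_def by auto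
                have "dist (f n, z) (l, z) < d" using elim by (simp add: dist_Pair_Pair)
                then show "dist (F (f n) z) (F l z) < e"
                  using d(2)[of "(l, z)" "(f n, z)"] \<open>z \<in> Kc\<close> \<open>f n \<in> K\<close> lK by auto
              qed
            qed
          qed
        qed
      qed
    qed
    then show "l \<in> T" unfolding T_def using lK by auto
  qed
  have "fst ` Z \<inter> K = {}"
  proof (rule ccontr)
    assume ne: "fst ` Z \<inter> K \<noteq> {}"
    have "connected K" unfolding K_def by simp
    then have nc: "\<not> (\<exists>A B. closed A \<and> closed B \<and> K \<subseteq> A \<union> B \<and> A \<inter> B \<inter> K = {} \<and> A \<inter> K \<noteq> {} \<and> B \<inter> K \<noteq> {})"
      unfolding connected_closed .
    have "0 \<in> K" unfolding K_def by simp
    then have TK: "T \<inter> K \<noteq> {}" using T0 by blast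
    have "T \<inter> fst ` Z \<inter> K = {}" using disj by simp
    then show False using nc clT clZ cover TK ne by blast
  qed
  moreover have "1 \<in> K" unfolding K_def by simp
  ultimately have "1 \<in> T" using cover by blast
  show ?thesis
  proof (intro allI impI)
    fix s :: complex assume "0 \<le> Re s"
    show "det (mat 1 + C s ** P s) \<noteq> 0"
    proof (cases "Re s = 0")
      case True then show ?thesis using axis[of 1 s] by simp
    next
      case False
      then have "s \<in> H" using \<open>0 \<le> Re s\<close> unfolding H_def by auto
      then show ?thesis using \<open>1 \<in> T\<close> unfolding T_def F_def by simp
    qed
  qed
qed


lemma entry_IpCP:
  "(mat 1 + B ** A) $ i $ j = (if i = j then 1 else 0) + (\<Sum>k\<in>UNIV. B$i$k * (A::complex^'n^'n)$k$j)"
  by (simp add: matrix_matrix_mult_def mat_def)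

lemma tr_comp: "transpose A $ i $ j = A $ j $ i"
  by (simp add: transpose_def)

lemma eq_at_point:
  fixes f g :: "complex \<Rightarrow> complex"
  assumes "isCont f s0" "isCont g s0" "finite A" "\<And>s. s \<notin> A \<Longrightarrow> f s = g s"
  shows "f s0 = g s0"
proof -
  have ev: "eventually (\<lambda>s. s \<notin> A) (at s0)" using assms(3) by (rule eventually_not_in_finite)
  have "(f \<longlongrightarrow> f s0) (at s0)" using assms(1) by (simp add: isCont_def)
  moreover have "(f \<longlongrightarrow> g s0) (at s0)"
  proof -
    have "(g \<longlongrightarrow> g s0) (at s0)" using assms(2) by (simp add: isCont_def)
    moreover have "eventually (\<lambda>s. g s = f s) (at s0)" using ev by eventually_elim (simp add: assms(4))
    ultimately show ?thesis by (rule Lim_transform_eventually)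
  qed
  ultimately show ?thesis by (rule tendsto_unique[rotated]) simp
qed

lemma stable_inverse:
  fixes P C M :: "complex \<Rightarrow> complex^'n^'n"
  assumes oU: "open U" and HU: "{s. 0 \<le> Re s} \<subseteq> U"
    and contP: "\<And>i j. continuous_on U (\<lambda>s. P s $ i $ j)"
    and contC: "\<And>i j. continuous_on U (\<lambda>s. C s $ i $ j)"
    and detnz: "\<forall>s. 0 \<le> Re s \<longrightarrow> det (mat 1 + C s ** P s) \<noteq> 0"
    and Mp: "real_rational_proper M" and Mi: "is_inverse_IpCP M P C"
  shows "feedback_stable P C"
proof -
  obtain p q where pq: "\<And>i j. q i j \<noteq> 0 \<and> degree (p i j) \<le> degree (q i j) \<and> (\<forall>s. M s $ i $ j = rat_fun (p i j) (q i j) s)"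
    using Mp unfolding real_rational_proper_def by metis
  define g where "g i j = gcd (p i j) (q i j)" for i j
  define p' where "p' i j = p i j div g i j" for i j
  define q' where "q' i j = q i j div g i j" for i j
  have gnz: "g i j \<noteq> 0" for i j using pq unfolding g_def by auto
  have pe: "p i j = g i j * p' i j" for i j unfolding p'_def g_def by simp
  have qe: "q i j = g i j * q' i j" for i j unfolding q'_def g_def by simp
  have q'nz: "q' i j \<noteq> 0" for i j using qe[of i j] pq[of i j] by auto
  have deg: "degree (p' i j) \<le> degree (q' i j)" for i j
  proof (cases "p' i j = 0")
    case False
    have "degree (p i j) = degree (g i j) + degree (p' i j)"
      using pe[of i j] gnz False by (simp add: degree_mult_eq)
    moreover have "degree (q i j) = degree (g i j) + degree (q' i j)"
      using qe[of i j] gnz q'nz by (simp add: degree_mult_eq)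
    ultimately show ?thesis using pq[of i j] by simp
  qed simp
  have bez: "poly (cp (q' i j)) s = 0 \<Longrightarrow> poly (cp (p' i j)) s \<noteq> 0" for i j s
  proof -
    have "coprime (p' i j) (q' i j)" unfolding p'_def q'_def g_def
      using pq[of i j] by (intro div_gcd_coprime) auto
    then have "gcd (p' i j) (q' i j) = 1" by simp
    then obtain a b where ab: "a * p' i j + b * q' i j = 1"
      using bezout_coefficients_fst_snd by metis
    have "poly (cp (a * p' i j + b * q' i j)) s = 1" unfolding ab by simp
    then have "poly (cp a) s * poly (cp (p' i j)) s + poly (cp b) s * poly (cp (q' i j)) s = 1"
      by (simp add: cp_add cp_mult)
    then show "poly (cp (q' i j)) s = 0 \<Longrightarrow> poly (cp (p' i j)) s \<noteq> 0" by auto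
  qed
  define M' where "M' s = (\<chi> i j. rat_fun (p' i j) (q' i j) s)" for s
  define X where "X s = mat 1 + C s ** P s" for s
  define E where "E = {s. M s ** X s \<noteq> mat 1}"
  have finE: "finite E" using Mi unfolding E_def X_def is_inverse_IpCP_def .
  define Zq where "Zq = (\<Union>i. \<Union>j. {s. poly (cp (q i j)) s = 0})"
  have finZq: "finite Zq" unfolding Zq_def
    using pq by (intro finite_UN_I finite_UNIV poly_roots_finite) (auto simp: cp_eq_0)
  have MM': "M' s = M s" if "s \<notin> Zq" for s
  proof -
    have "M' s $ i $ j = M s $ i $ j" for i j
    proof -
      have nz: "poly (cp (q i j)) s \<noteq> 0" using that unfolding Zq_def by auto
      then have "poly (cp (g i j)) s \<noteq> 0" unfolding qe cp_mult by auto
      then show ?thesis using pq[of i j] unfolding M'_def rat_fun_def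
        by (simp add: pe[of i j] qe[of i j] cp_mult)
    qed
    then show ?thesis by (simp add: vec_eq_iff)
  qed
  have inv': "is_inverse_IpCP M' P C"
  proof -
    have "{s. M' s ** (mat 1 + C s ** P s) \<noteq> mat 1} \<subseteq> E \<union> Zq"
      using MM' unfolding E_def X_def by auto
    then show ?thesis unfolding is_inverse_IpCP_def using finE finZq finite_subset by blast
  qed
  have contX: "continuous_on U (\<lambda>s. X s $ i $ j)" for i j
    unfolding X_def entry_IpCP by (intro continuous_intros contP contC)
  have noroot: "poly (cp (q' i k)) s0 \<noteq> 0" if "0 \<le> Re s0" for i k s0
  proof
    assume q0: "poly (cp (q' i k)) s0 = 0"
    define D where "D s = det (\<chi> a b. if b = k then (if i = a then 1 else 0) else X s $ b $ a)" for s
    have key: "poly (cp (p' i k)) s * det (X s) = poly (cp (q' i k)) s * D s" if "s \<notin> E \<union> Zq" for s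
    proof -
      have MX: "M s ** X s = mat 1" using that unfolding E_def by auto
      have tv: "(transpose (X s) *v (M s $ i)) $ a = (if i = a then 1 else 0)" for a
      proof -
        have "(transpose (X s) *v (M s $ i)) $ a = (M s ** X s) $ i $ a"
          by (simp add: matrix_vector_mult_def transpose_def matrix_matrix_mult_def mult.commute)
        then show ?thesis using MX by (simp add: mat_def)
      qed
      have "D s = M s $ i $ k * det (transpose (X s))"
        using cramer_lemma[where A="transpose (X s)" and k=k and x="M s $ i"] unfolding D_def tv tr_comp .
      then have DM: "D s = M s $ i $ k * det (X s)" by (simp add: det_transpose)
      have "s \<notin> Zq" using that by auto
      then have nz: "poly (cp (q i k)) s \<noteq> 0" unfolding Zq_def by auto
      then have nz': "poly (cp (q' i k)) s \<noteq> 0" unfolding qe cp_mult by auto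
      have "M s $ i $ k = poly (cp (p' i k)) s / poly (cp (q' i k)) s"
        using MM'[OF \<open>s \<notin> Zq\<close>, symmetric] unfolding M'_def rat_fun_def by simp
      then show ?thesis using DM nz' by (simp add: field_simps)
    qed
    have s0U: "s0 \<in> U" using HU that by auto
    have ic: "isCont f s0" if "continuous_on U f" for f :: "complex \<Rightarrow> complex"
      using that continuous_on_eq_continuous_at[OF oU] s0U by blast
    have cD: "continuous_on U D" unfolding D_def
      apply (intro continuous_on_det)
      subgoal for a b by (cases "b = k") (simp_all add: contX)
      done
    have "poly (cp (p' i k)) s0 * det (X s0) = poly (cp (q' i k)) s0 * D s0"
    proof (rule eq_at_point[where f="\<lambda>s. poly (cp (p' i k)) s * det (X s)" and g="\<lambda>s. poly (cp (q' i k)) s * D s" and A="E \<union> Zq"])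
      show "isCont (\<lambda>s. poly (cp (p' i k)) s * det (X s)) s0"
        by (intro ic continuous_intros continuous_on_poly continuous_on_det contX)
      show "isCont (\<lambda>s. poly (cp (q' i k)) s * D s) s0"
        by (intro ic continuous_intros continuous_on_poly cD)
      show "finite (E \<union> Zq)" using finE finZq by simp
    qed (rule key)
    then have "poly (cp (p' i k)) s0 * det (X s0) = 0" using q0 by simp
    moreover have "poly (cp (p' i k)) s0 \<noteq> 0" using bez q0 by blast
    moreover have "det (X s0) \<noteq> 0" using detnz that unfolding X_def by blast
    ultimately show False by simp
  qed
  have "real_rational_proper_stable M'"
    unfolding real_rational_proper_stable_def
  proof (intro allI)
    fix i j
    show "\<exists>p q. q \<noteq> 0 \<and> degree p \<le> degree q \<and> (\<forall>s. 0 \<le> Re s \<longrightarrow> poly (cp q) s \<noteq> 0) \<and>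
            (\<forall>s. M' s $ i $ j = rat_fun p q s)"
      by (rule exI[of _ "p' i j"], rule exI[of _ "q' i j"]) (simp add: q'nz deg noroot M'_def)
  qed
  then show ?thesis unfolding feedback_stable_def using inv' by blast
qed

theorem theorem3:
  fixes P C :: "complex \<Rightarrow> complex^'n^'n"
  assumes "real_rational_proper_stable P"
    and "real_rational_proper_stable C"
    and "well_posed P C"
    and "\<forall>w::real. freq_angle (P (\<i> * of_real w)) + freq_angle (C (\<i> * of_real w)) < pi"
    and "freq_angle (val_inf P) + freq_angle (val_inf C) < pi"
    and "freq_angle (val_minf P) + freq_angle (val_minf C) < pi"
  shows "feedback_stable P C"
proof -
  obtain UP where UP: "open UP" "{s. 0 \<le> Re s} \<subseteq> UP" "\<And>i j. (\<lambda>s. P s $ i $ j) holomorphic_on UP"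
      "\<And>i j. ((\<lambda>s. P s $ i $ j) \<longlongrightarrow> val_inf P $ i $ j) at_infinity"
    using stable_props[OF assms(1)] by blast
  obtain UC where UC: "open UC" "{s. 0 \<le> Re s} \<subseteq> UC" "\<And>i j. (\<lambda>s. C s $ i $ j) holomorphic_on UC"
      "\<And>i j. ((\<lambda>s. C s $ i $ j) \<longlongrightarrow> val_inf C $ i $ j) at_infinity"
    using stable_props[OF assms(2)] by blast
  define U where "U = UP \<inter> UC"
  have oU: "open U" unfolding U_def using UP UC by auto
  have HU: "{s. 0 \<le> Re s} \<subseteq> U" unfolding U_def using UP UC by auto
  have holP: "(\<lambda>s. P s $ i $ j) holomorphic_on U" for i j
    using holomorphic_on_subset[OF UP(3)] unfolding U_def by blast
  have holC: "(\<lambda>s. C s $ i $ j) holomorphic_on U" for i j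
    using holomorphic_on_subset[OF UC(3)] unfolding U_def by blast
  have axis: "det (mat 1 + t *\<^sub>R (C s ** P s)) \<noteq> 0" if "0 \<le> t" "Re s = 0" for t s
  proof -
    have "s = \<i> * of_real (Im s)" using that(2) by (simp add: complex_eq_iff)
    then have "freq_angle (P s) + freq_angle (C s) < pi" using assms(4) by metis
    then show ?thesis using angle_det that(1) by blast
  qed
  have infty: "det (mat 1 + t *\<^sub>R (val_inf C ** val_inf P)) \<noteq> 0" if "0 \<le> t" for t
    using angle_det[OF assms(5) that] .
  have detnz: "\<forall>s. 0 \<le> Re s \<longrightarrow> det (mat 1 + C s ** P s) \<noteq> 0"
    by (rule homotopy_main[OF oU HU holP holC UP(4) UC(4) axis infty])
  obtain M where Mp: "real_rational_proper M" and Mi: "is_inverse_IpCP M P C"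
    using assms(3) unfolding well_posed_def by blast
  have contP: "continuous_on U (\<lambda>s. P s $ i $ j)" for i j
    using holP holomorphic_on_imp_continuous_on by blast
  have contC: "continuous_on U (\<lambda>s. C s $ i $ j)" for i j
    using holC holomorphic_on_imp_continuous_on by blast
  show ?thesis by (rule stable_inverse[OF oU HU contP contC detnz Mp Mi])
qed

end
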